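(* Let $f:I\to[n]$ and $f':I'\to[n]$ be left active morphisms in $\Delta$ such that the claw $(f,f')$ is compatible, and consider their pullback square in $\Delta$ (with corners $I\cap I'$, $I$, $I'$, $[n]$), which is strongly biCartesian. Then the image of this square under the canonical functor $\Delta\to\Lambda$ is a pushout square in $\Lambda$.
   Context: $\Delta$: simplex category of $[n]=\{0<\dots<n\}$, weakly monotone maps; $f$ left active means $f(0)=0$. $\Lambda$: Connes' cyclic category with canonical functor $\Delta\to\Lambda$, $[n]\mapsto\langle n\rangle=(\mathbb{Z}/(n+1),+1)$, identifying $\Delta$ with the slice $\Lambda_{/\langle0\rangle}$ (forgetful functor). A pair $(f:I\to[n],f':I'\to[n])$ is compatible if (BC1) for each $i\in[n]$ at most one of $f^{-1}\{i\},f'^{-1}\{i\}$ is not a singleton, and (BC2) for each $0<i\le n$ at most one of $f(I),f'(I')$ fails to contain $\{i-1,i\}$. *)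

theory Defs
  imports Main
begin

text \<open>Objects [m] are represented by m::nat (the ordinal {0<...<m}).
  A morphism [m] -> [n] is represented by a function f :: nat => nat whose
  restriction to {0..m} is weakly monotone with values in {0..n}; values
  outside {0..m} are irrelevant (morphisms are compared on {0..m}).\<close>

definition delta_hom :: "nat \<Rightarrow> nat \<Rightarrow> (nat \<Rightarrow> nat) \<Rightarrow> bool" where
  "delta_hom m n f \<longleftrightarrow> (\<forall>i\<le>m. f i \<le> n) \<and> (\<forall>i j. i \<le> j \<and> j \<le> m \<longrightarrow> f i \<le> f j)"

definition left_active :: "(nat \<Rightarrow> nat) \<Rightarrow> bool" where
  "left_active f \<longleftrightarrow> f 0 = 0"

text \<open>Compatibility of a claw (f : [m] -> [n], f' : [m'] -> [n]), conditions (BC1), (BC2).\<close>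

definition compatible :: "nat \<Rightarrow> (nat \<Rightarrow> nat) \<Rightarrow> nat \<Rightarrow> (nat \<Rightarrow> nat) \<Rightarrow> nat \<Rightarrow> bool" where
  "compatible m f m' f' n \<longleftrightarrow>
     (\<forall>i\<le>n. card {j. j \<le> m \<and> f j = i} = 1 \<or> card {j. j \<le> m' \<and> f' j = i} = 1) \<and>
     (\<forall>i. 0 < i \<and> i \<le> n \<longrightarrow> {i - 1, i} \<subseteq> f ` {..m} \<or> {i - 1, i} \<subseteq> f' ` {..m'})"

definition delta_pullback ::
  "nat \<Rightarrow> (nat \<Rightarrow> nat) \<Rightarrow> nat \<Rightarrow> (nat \<Rightarrow> nat) \<Rightarrow> nat \<Rightarrow> (nat \<Rightarrow> nat) \<Rightarrow> (nat \<Rightarrow> nat) \<Rightarrow> nat \<Rightarrow> bool" where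
  "delta_pullback p g m g' m' f f' n \<longleftrightarrow>
     delta_hom p m g \<and> delta_hom p m' g' \<and> delta_hom m n f \<and> delta_hom m' n f' \<and>
     (\<forall>i\<le>p. f (g i) = f' (g' i)) \<and>
     (\<forall>q h h'. delta_hom q m h \<and> delta_hom q m' h' \<and> (\<forall>i\<le>q. f (h i) = f' (h' i)) \<longrightarrow>
        (\<exists>u. delta_hom q p u \<and> (\<forall>i\<le>q. g (u i) = h i \<and> g' (u i) = h' i) \<and>
             (\<forall>v. delta_hom q p v \<and> (\<forall>i\<le>q. g (v i) = h i \<and> g' (v i) = h' i) \<longrightarrow>
                  (\<forall>i\<le>q. v i = u i))))"

text \<open>Model of Lambda: objects <n> (n::nat); a morphism <m> -> <n> is represented by a
  weakly monotone F :: int => int with F (x + (m+1)) = F x + (n+1) (a morphism of the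
  paracyclic category), and two representatives define the same morphism of Lambda iff
  they differ by an integer multiple of n+1.\<close>

definition lam_rep :: "nat \<Rightarrow> nat \<Rightarrow> (int \<Rightarrow> int) \<Rightarrow> bool" where
  "lam_rep m n F \<longleftrightarrow> mono F \<and> (\<forall>x. F (x + int m + 1) = F x + int n + 1)"

definition lam_eq :: "nat \<Rightarrow> (int \<Rightarrow> int) \<Rightarrow> (int \<Rightarrow> int) \<Rightarrow> bool" where
  "lam_eq n F G \<longleftrightarrow> (\<exists>k::int. \<forall>x. F x = G x + k * (int n + 1))"

text \<open>The canonical functor Delta -> Lambda, [m] |-> <m>, on morphisms.\<close>

definition lam_of :: "nat \<Rightarrow> nat \<Rightarrow> (nat \<Rightarrow> nat) \<Rightarrow> int \<Rightarrow> int" where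
  "lam_of m n f x = int (f (nat (x mod (int m + 1)))) + (x div (int m + 1)) * (int n + 1)"

definition lam_pushout ::
  "nat \<Rightarrow> (int \<Rightarrow> int) \<Rightarrow> nat \<Rightarrow> (int \<Rightarrow> int) \<Rightarrow> nat \<Rightarrow> (int \<Rightarrow> int) \<Rightarrow> (int \<Rightarrow> int) \<Rightarrow> nat \<Rightarrow> bool" where
  "lam_pushout p A m B m' C D n \<longleftrightarrow>
     lam_rep p m A \<and> lam_rep p m' B \<and> lam_rep m n C \<and> lam_rep m' n D \<and>
     lam_eq n (C \<circ> A) (D \<circ> B) \<and>
     (\<forall>k X Y. lam_rep m k X \<and> lam_rep m' k Y \<and> lam_eq k (X \<circ> A) (Y \<circ> B) \<longrightarrow>
        (\<exists>Z. lam_rep n k Z \<and> lam_eq k (Z \<circ> C) X \<and> lam_eq k (Z \<circ> D) Y \<and>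
             (\<forall>W. lam_rep n k W \<and> lam_eq k (W \<circ> C) X \<and> lam_eq k (W \<circ> D) Y \<longrightarrow>
                  lam_eq k W Z)))"

end

theory Submission
  imports Defs
begin

lemma split_mod: "a \<le> n \<Longrightarrow> (int a + t * (int n + 1)) mod (int n + 1) = int a"
  by (simp add: mod_pos_pos_trivial)
lemma split_div: "a \<le> n \<Longrightarrow> (int a + t * (int n + 1)) div (int n + 1) = t"
  by (simp add: div_pos_pos_trivial)

lemma lam_of_split: "a \<le> m \<Longrightarrow> lam_of m n f (int a + t * (int m + 1)) = int (f a) + t * (int n + 1)"
  unfolding lam_of_def using split_mod[of a m t] split_div[of a m t] by simp

lemma decomp: "\<exists>a t. a \<le> m \<and> x = int a + t * (int m + 1)"
proof (intro exI conjI)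
  show "nat (x mod (int m + 1)) \<le> m"
  proof -
    have "x mod (int m + 1) < int m + 1" by (rule pos_mod_bound) simp
    then show ?thesis by (simp add: nat_le_iff)
  qed
  show "x = int (nat (x mod (int m + 1))) + x div (int m + 1) * (int m + 1)"
    by (simp add: mod_div_mult_eq)
qed

lemma lex_le:
  assumes "i \<le> n" "j \<le> n"
  shows "int i + s * (int n + 1) \<le> int j + t * (int n + 1) \<longleftrightarrow> s < t \<or> (s = t \<and> i \<le> j)"
proof
  assume h: "int i + s * (int n + 1) \<le> int j + t * (int n + 1)"
  show "s < t \<or> (s = t \<and> i \<le> j)"
  proof (rule ccontr)
    assume "\<not> ?thesis"
    then have "t < s \<or> (s = t \<and> j < i)" by auto
    then show False
    proof
      assume "t < s"
      then have "(t + 1) * (int n + 1) \<le> s * (int n + 1)" by (intro mult_right_mono) auto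
      then show False using h assms by (simp add: algebra_simps)
    next
      assume "s = t \<and> j < i" then show False using h by simp
    qed
  qed
next
  assume "s < t \<or> (s = t \<and> i \<le> j)"
  then show "int i + s * (int n + 1) \<le> int j + t * (int n + 1)"
  proof
    assume "s < t"
    then have "(s + 1) * (int n + 1) \<le> t * (int n + 1)" by (intro mult_right_mono) auto
    then show ?thesis using assms by (simp add: algebra_simps)
  qed auto
qed

lemma lex_eq:
  assumes "i \<le> n" "j \<le> n" "int i + s * (int n + 1) = int j + t * (int n + 1)"
  shows "i = j \<and> s = t"
  using lex_le[OF assms(1,2), of s t] lex_le[OF assms(2,1), of t s] assms(3) by auto

lemma lam_of_rep:
  assumes "delta_hom m n f"
  shows "lam_rep m n (lam_of m n f)"
  unfolding lam_rep_def
proof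
  have fb: "\<And>i. i \<le> m \<Longrightarrow> f i \<le> n" and fm: "\<And>i j. i \<le> j \<Longrightarrow> j \<le> m \<Longrightarrow> f i \<le> f j"
    using assms unfolding delta_hom_def by auto
  show "mono (lam_of m n f)"
  proof (rule monoI)
    fix x y :: int assume xy: "x \<le> y"
    obtain a s where a: "a \<le> m" "x = int a + s * (int m + 1)" using decomp by blast
    obtain b t where b: "b \<le> m" "y = int b + t * (int m + 1)" using decomp by blast
    have "s < t \<or> (s = t \<and> a \<le> b)" using lex_le[OF a(1) b(1)] xy a b by simp
    then have "s < t \<or> (s = t \<and> f a \<le> f b)" using fm b(1) by auto
    then show "lam_of m n f x \<le> lam_of m n f y"
      using lex_le[OF fb[OF a(1)] fb[OF b(1)]] lam_of_split[OF a(1)] lam_of_split[OF b(1)] a b by simp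
  qed
  show "\<forall>x. lam_of m n f (x + int m + 1) = lam_of m n f x + int n + 1"
  proof
    fix x
    obtain a s where a: "a \<le> m" "x = int a + s * (int m + 1)" using decomp by blast
    have e: "x + int m + 1 = int a + (s + 1) * (int m + 1)" using a by (simp add: algebra_simps)
    have "lam_of m n f (x + int m + 1) = int (f a) + (s + 1) * (int n + 1)"
      by (subst e) (rule lam_of_split[OF a(1)])
    also have "... = lam_of m n f x + int n + 1"
      using lam_of_split[OF a(1), of n f s] a by (simp add: algebra_simps)
    finally show "lam_of m n f (x + int m + 1) = lam_of m n f x + int n + 1" .
  qed
qed

lemma lam_of_comp:
  assumes "delta_hom p m g"
  shows "lam_of m n f (lam_of p m g x) = lam_of p n (f \<circ> g) x"
proof -
  obtain a s where a: "a \<le> p" "x = int a + s * (int p + 1)" using decomp by blast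
  have "g a \<le> m" using assms a unfolding delta_hom_def by auto
  then show ?thesis using lam_of_split[OF a(1)] lam_of_split[of "g a" m] lam_of_split[OF a(1), of "p" "f \<circ> g"] a by simp
qed

lemma mono_step:
  fixes Z :: "int \<Rightarrow> int"
  assumes "\<And>y. Z y \<le> Z (y + 1)"
  shows "mono Z"
proof (rule monoI)
  fix x y :: int assume "x \<le> y"
  have "\<And>d. Z x \<le> Z (x + int d)"
  proof -
    fix d show "Z x \<le> Z (x + int d)"
    proof (induction d)
      case (Suc d)
      have "x + int (Suc d) = x + int d + 1" by simp
      then show ?case using Suc assms[of "x + int d"] by (metis order_trans)
    qed simp
  qed
  moreover have "x + int (nat (y - x)) = y" using \<open>x \<le> y\<close> by simp
  ultimately show "Z x \<le> Z y" by metis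
qed


lemma fb: "delta_hom m n f \<Longrightarrow> a \<le> m \<Longrightarrow> f a \<le> n"
  unfolding delta_hom_def by auto

lemma card1_ex: "card {j. j \<le> m \<and> f j = (i::nat)} = 1 \<Longrightarrow> \<exists>j. j \<le> m \<and> f j = i"
proof -
  assume a: "card {j. j \<le> m \<and> f j = i} = 1"
  have "{j. j \<le> m \<and> f j = i} \<noteq> {}"
  proof
    assume "{j. j \<le> m \<and> f j = i} = {}"
    then have "card {j. j \<le> m \<and> f j = i} = 0" by (simp only: card.empty)
    then show False using a by simp
  qed
  then show ?thesis by blast
qed

lemma K1:
  assumes hf: "delta_hom m n f" and hf': "delta_hom m' n f'"
    and PB: "\<forall>a\<le>m. \<forall>a'\<le>m'. f a = f' a' \<longrightarrow> (\<exists>l\<le>p. g l = a \<and> g' l = a')"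
    and XY: "\<forall>x. X (lam_of p m g x) = Y (lam_of p m' g' x)"
    and eq: "lam_of m n f x = lam_of m' n f' x'"
  shows "X x = Y x'"
proof -
  obtain a s where a: "a \<le> m" "x = int a + s * (int m + 1)" using decomp by blast
  obtain b t where b: "b \<le> m'" "x' = int b + t * (int m' + 1)" using decomp by blast
  have "int (f a) + s * (int n + 1) = int (f' b) + t * (int n + 1)"
    using eq lam_of_split[OF a(1)] lam_of_split[OF b(1)] a b by simp
  then have e: "f a = f' b" "s = t" using lex_eq[OF fb[OF hf a(1)] fb[OF hf' b(1)]] by auto
  obtain l where l: "l \<le> p" "g l = a" "g' l = b" using PB a(1) b(1) e(1) by blast
  have "lam_of p m g (int l + s * (int p + 1)) = x" using lam_of_split[OF l(1)] l a by simp
  moreover have "lam_of p m' g' (int l + s * (int p + 1)) = x'" using lam_of_split[OF l(1)] l b e by simp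
  ultimately show ?thesis using XY by metis
qed

lemma K2:
  assumes hf: "delta_hom m n f" and hf': "delta_hom m' n f'"
    and BC1: "\<forall>i\<le>n. card {j. j \<le> m \<and> f j = i} = 1 \<or> card {j. j \<le> m' \<and> f' j = i} = 1"
    and K: "\<forall>x x'. lam_of m n f x = lam_of m' n f' x' \<longrightarrow> X x = Y x'"
    and eq: "lam_of m n f x1 = lam_of m n f x2"
  shows "X x1 = X x2"
proof -
  obtain a s where a: "a \<le> m" "x1 = int a + s * (int m + 1)" using decomp by blast
  obtain b t where b: "b \<le> m" "x2 = int b + t * (int m + 1)" using decomp by blast
  have "int (f a) + s * (int n + 1) = int (f b) + t * (int n + 1)"
    using eq lam_of_split[OF a(1)] lam_of_split[OF b(1)] a b by simp
  then have e: "f a = f b" "s = t" using lex_eq[OF fb[OF hf a(1)] fb[OF hf b(1)]] by auto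
  show ?thesis
  proof (cases "a = b")
    case True then show ?thesis using a b e by simp
  next
    case False
    have "{a, b} \<subseteq> {j. j \<le> m \<and> f j = f a}" using a b e by auto
    moreover have "finite {j. j \<le> m \<and> f j = f a}" by simp
    ultimately have "card {a, b} \<le> card {j. j \<le> m \<and> f j = f a}" by (rule card_mono[rotated])
    then have "card {j. j \<le> m \<and> f j = f a} \<noteq> 1" using False by simp
    then have "card {j. j \<le> m' \<and> f' j = f a} = 1" using BC1 fb[OF hf a(1)] by blast
    then obtain c where c: "c \<le> m'" "f' c = f a"
      using card1_ex by blast
    have "lam_of m' n f' (int c + s * (int m' + 1)) = int (f a) + s * (int n + 1)"
      using lam_of_split[OF c(1)] c by simp
    moreover have "lam_of m n f x1 = int (f a) + s * (int n + 1)" using lam_of_split[OF a(1)] a by simp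
    ultimately have e1: "lam_of m n f x1 = lam_of m' n f' (int c + s * (int m' + 1))" by simp
    have "X x1 = Y (int c + s * (int m' + 1))" using K e1 by blast
    moreover have e2: "lam_of m n f x2 = lam_of m' n f' (int c + s * (int m' + 1))" using e1 eq by simp
    moreover have "X x2 = Y (int c + s * (int m' + 1))" using K e2 by blast
    ultimately show ?thesis by simp
  qed
qed

lemma K4:
  assumes BC1: "\<forall>i\<le>n. card {j. j \<le> m \<and> f j = i} = 1 \<or> card {j. j \<le> m' \<and> f' j = i} = 1"
  shows "(\<exists>x. lam_of m n f x = y) \<or> (\<exists>x. lam_of m' n f' x = y)"
proof -
  obtain i t where i: "i \<le> n" "y = int i + t * (int n + 1)" using decomp by blast
  have "card {j. j \<le> m \<and> f j = i} = 1 \<or> card {j. j \<le> m' \<and> f' j = i} = 1" using BC1 i by blast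
  then show ?thesis
  proof
    assume "card {j. j \<le> m \<and> f j = i} = 1"
    then obtain c where c: "c \<le> m" "f c = i"
      using card1_ex by blast
    then show ?thesis using lam_of_split[OF c(1), of n f t] i by auto
  next
    assume "card {j. j \<le> m' \<and> f' j = i} = 1"
    then obtain c where c: "c \<le> m'" "f' c = i"
      using card1_ex by blast
    then show ?thesis using lam_of_split[OF c(1), of n f' t] i by auto
  qed
qed

lemma K5_one:
  assumes hf: "delta_hom m n f" and a: "a \<le> m" "f a = i" and b: "b \<le> m" "f b = Suc i"
  shows "\<exists>x1 x2. x1 \<le> x2 \<and> lam_of m n f x1 = int i + t * (int n + 1)
            \<and> lam_of m n f x2 = int i + t * (int n + 1) + 1"
proof (intro exI conjI)
  have "a \<le> b"
  proof (rule ccontr)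
    assume "\<not> a \<le> b" then have "f b \<le> f a" using hf a unfolding delta_hom_def by auto
    then show False using a b by simp
  qed
  then show "int a + t * (int m + 1) \<le> int b + t * (int m + 1)" by simp
  show "lam_of m n f (int a + t * (int m + 1)) = int i + t * (int n + 1)"
    using lam_of_split[OF a(1)] a by simp
  show "lam_of m n f (int b + t * (int m + 1)) = int i + t * (int n + 1) + 1"
    using lam_of_split[OF b(1)] b by simp
qed

lemma K5_wrap:
  assumes hf: "delta_hom m n f" and la: "f 0 = 0" and a: "a \<le> m" "f a = n"
  shows "\<exists>x1 x2. x1 \<le> x2 \<and> lam_of m n f x1 = int n + t * (int n + 1)
            \<and> lam_of m n f x2 = int n + t * (int n + 1) + 1"
proof (intro exI conjI)
  show "int a + t * (int m + 1) \<le> int 0 + (t + 1) * (int m + 1)" using a by (simp add: algebra_simps)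
  show "lam_of m n f (int a + t * (int m + 1)) = int n + t * (int n + 1)"
    using lam_of_split[OF a(1)] a by simp
  show "lam_of m n f (int 0 + (t + 1) * (int m + 1)) = int n + t * (int n + 1) + 1"
    using lam_of_split[of 0 m n f "t+1"] la by (simp add: algebra_simps)
qed

lemma K5:
  assumes hf: "delta_hom m n f" and hf': "delta_hom m' n f'"
    and la: "f 0 = 0" and la': "f' 0 = 0"
    and BC1: "\<forall>i\<le>n. card {j. j \<le> m \<and> f j = i} = 1 \<or> card {j. j \<le> m' \<and> f' j = i} = 1"
    and BC2: "\<forall>i. 0 < i \<and> i \<le> n \<longrightarrow> {i - 1, i} \<subseteq> f ` {..m} \<or> {i - 1, i} \<subseteq> f' ` {..m'}"
  shows "(\<exists>x1 x2. x1 \<le> x2 \<and> lam_of m n f x1 = y \<and> lam_of m n f x2 = y + 1) \<or>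
         (\<exists>x1 x2. x1 \<le> x2 \<and> lam_of m' n f' x1 = y \<and> lam_of m' n f' x2 = y + 1)"
proof -
  obtain i t where i: "i \<le> n" "y = int i + t * (int n + 1)" using decomp by blast
  show ?thesis
  proof (cases "i < n")
    case True
    then have "{Suc i - 1, Suc i} \<subseteq> f ` {..m} \<or> {Suc i - 1, Suc i} \<subseteq> f' ` {..m'}" using BC2[rule_format, of "Suc i"] by simp
    then show ?thesis
    proof
      assume "{Suc i - 1, Suc i} \<subseteq> f ` {..m}"
      then obtain a b where ab: "a \<le> m" "f a = i" "b \<le> m" "f b = Suc i" by auto
      show ?thesis using K5_one[OF hf ab, of t] i(2) by blast
    next
      assume "{Suc i - 1, Suc i} \<subseteq> f' ` {..m'}"
      then obtain a b where ab: "a \<le> m'" "f' a = i" "b \<le> m'" "f' b = Suc i" by auto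
      show ?thesis using K5_one[OF hf' ab, of t] i(2) by blast
    qed
  next
    case False
    then have "i = n" using i by simp
    have "card {j. j \<le> m \<and> f j = n} = 1 \<or> card {j. j \<le> m' \<and> f' j = n} = 1" using BC1 by blast
    then show ?thesis
    proof
      assume "card {j. j \<le> m \<and> f j = n} = 1"
      then obtain c where c: "c \<le> m" "f c = n"
        using card1_ex by blast
      have "y = int n + t * (int n + 1)" using i(2) \<open>i = n\<close> by simp
      then show ?thesis using K5_wrap[OF hf la c, of t] by blast
    next
      assume "card {j. j \<le> m' \<and> f' j = n} = 1"
      then obtain c where c: "c \<le> m'" "f' c = n"
        using card1_ex by blast
      have "y = int n + t * (int n + 1)" using i(2) \<open>i = n\<close> by simp
      then show ?thesis using K5_wrap[OF hf' la' c, of t] by blast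
    qed
  qed
qed


theorem lemma4p2p8:
  fixes m m' n p :: nat and f f' g g' :: "nat \<Rightarrow> nat"
  assumes "delta_hom m n f" and "delta_hom m' n f'"
    and "left_active f" and "left_active f'"
    and "compatible m f m' f' n"
    and "delta_pullback p g m g' m' f f' n"
  shows "lam_pushout p (lam_of p m g) m (lam_of p m' g') m'
           (lam_of m n f) (lam_of m' n f') n"
proof -
  note hf = assms(1) and hf' = assms(2)
  have la: "f 0 = 0" and la': "f' 0 = 0" using assms(3,4) unfolding left_active_def by auto
  have BC1: "\<forall>i\<le>n. card {j. j \<le> m \<and> f j = i} = 1 \<or> card {j. j \<le> m' \<and> f' j = i} = 1"
    and BC2: "\<forall>i. 0 < i \<and> i \<le> n \<longrightarrow> {i - 1, i} \<subseteq> f ` {..m} \<or> {i - 1, i} \<subseteq> f' ` {..m'}"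
    using assms(5) unfolding compatible_def by auto
  have BC1s: "\<forall>i\<le>n. card {j. j \<le> m' \<and> f' j = i} = 1 \<or> card {j. j \<le> m \<and> f j = i} = 1"
    using BC1 by blast
  have hg: "delta_hom p m g" and hg': "delta_hom p m' g'" and fg: "\<forall>i\<le>p. f (g i) = f' (g' i)"
    using assms(6) unfolding delta_pullback_def by auto
  have univ: "\<forall>q h h'. delta_hom q m h \<and> delta_hom q m' h' \<and> (\<forall>i\<le>q. f (h i) = f' (h' i)) \<longrightarrow>
        (\<exists>u. delta_hom q p u \<and> (\<forall>i\<le>q. g (u i) = h i \<and> g' (u i) = h' i) \<and>
             (\<forall>v. delta_hom q p v \<and> (\<forall>i\<le>q. g (v i) = h i \<and> g' (v i) = h' i) \<longrightarrow>
                  (\<forall>i\<le>q. v i = u i)))"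
    using assms(6) unfolding delta_pullback_def by blast
  have PB: "\<forall>a\<le>m. \<forall>a'\<le>m'. f a = f' a' \<longrightarrow> (\<exists>l\<le>p. g l = a \<and> g' l = a')"
  proof (intro allI impI)
    fix a a' assume aa: "a \<le> m" "a' \<le> m'" "f a = f' a'"
    have h1: "delta_hom 0 m (\<lambda>_. a)" "delta_hom 0 m' (\<lambda>_. a')"
      unfolding delta_hom_def using aa by auto
    have h2: "\<forall>i\<le>(0::nat). f ((\<lambda>_. a) i) = f' ((\<lambda>_. a') i)" using aa by simp
    obtain u where u: "delta_hom 0 p u" "\<forall>i\<le>(0::nat). g (u i) = a \<and> g' (u i) = a'"
      using univ[rule_format, OF conjI[OF h1(1) conjI[OF h1(2) h2]]] by blast
    have "u 0 \<le> p" using u(1) unfolding delta_hom_def by auto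
    then show "\<exists>l\<le>p. g l = a \<and> g' l = a'" using u(2) by blast
  qed
  have PBs: "\<forall>a'\<le>m'. \<forall>a\<le>m. f' a' = f a \<longrightarrow> (\<exists>l\<le>p. g' l = a' \<and> g l = a)"
    using PB by metis
  have CA: "\<And>x. lam_of m n f (lam_of p m g x) = lam_of m' n f' (lam_of p m' g' x)"
  proof -
    fix x
    obtain a s where a: "a \<le> p" "x = int a + s * (int p + 1)" using decomp by blast
    have "g a \<le> m" "g' a \<le> m'" using hg hg' a(1) fb by auto
    then show "lam_of m n f (lam_of p m g x) = lam_of m' n f' (lam_of p m' g' x)"
      using lam_of_split[OF a(1), of m g s] lam_of_split[OF a(1), of m' g' s]
        lam_of_split[of "g a" m n f s] lam_of_split[of "g' a" m' n f' s] fg a by simp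
  qed
  have RC: "lam_rep m n (lam_of m n f)" and RD: "lam_rep m' n (lam_of m' n f')"
    using lam_of_rep hf hf' by auto
  have RCe: "\<And>x. lam_of m n f (x + int m + 1) = lam_of m n f x + int n + 1"
    using RC unfolding lam_rep_def by blast
  have RDe: "\<And>x. lam_of m' n f' (x + int m' + 1) = lam_of m' n f' x + int n + 1"
    using RD unfolding lam_rep_def by blast
  show ?thesis unfolding lam_pushout_def
  proof (intro conjI allI impI)
    show "lam_rep p m (lam_of p m g)" "lam_rep p m' (lam_of p m' g')"
      "lam_rep m n (lam_of m n f)" "lam_rep m' n (lam_of m' n f')"
      using lam_of_rep hf hf' hg hg' by auto
    show "lam_eq n (lam_of m n f \<circ> lam_of p m g) (lam_of m' n f' \<circ> lam_of p m' g')"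
      unfolding lam_eq_def by (intro exI[of _ 0]) (simp add: CA)
  next
    fix k X Y
    assume H: "lam_rep m k X \<and> lam_rep m' k Y \<and> lam_eq k (X \<circ> lam_of p m g) (Y \<circ> lam_of p m' g')"
    define K where "K = int k + 1"
    have Kpos: "K > 0" unfolding K_def by simp
    have monoX: "mono X" and Xe: "\<And>x. X (x + int m + 1) = X x + K"
      using H unfolding lam_rep_def K_def by (auto simp: add.assoc)
    have monoY: "mono Y" and Ye: "\<And>x. Y (x + int m' + 1) = Y x + K"
      using H unfolding lam_rep_def K_def by (auto simp: add.assoc)
    obtain j where j: "\<And>x. X (lam_of p m g x) = Y (lam_of p m' g' x) + j * K"
      using H unfolding lam_eq_def K_def by auto
    define Y' where "Y' = (\<lambda>x. Y x + j * K)"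
    have monoY': "mono Y'" using monoY unfolding Y'_def mono_def by auto
    have Y'e: "\<And>x. Y' (x + int m' + 1) = Y' x + K" using Ye unfolding Y'_def by simp
    have XY: "\<forall>x. X (lam_of p m g x) = Y' (lam_of p m' g' x)" using j unfolding Y'_def by simp
    have YX: "\<forall>x. Y' (lam_of p m' g' x) = X (lam_of p m g x)" using XY by simp
    have K1a: "\<forall>x x'. lam_of m n f x = lam_of m' n f' x' \<longrightarrow> X x = Y' x'"
      using K1[OF hf hf' PB XY] by blast
    have K1b: "\<forall>x x'. lam_of m' n f' x = lam_of m n f x' \<longrightarrow> Y' x = X x'"
      using K1[OF hf' hf PBs YX] by blast
    have K2a: "\<And>x1 x2. lam_of m n f x1 = lam_of m n f x2 \<Longrightarrow> X x1 = X x2"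
      using K2[OF hf hf' BC1 K1a] by blast
    have K2b: "\<And>x1 x2. lam_of m' n f' x1 = lam_of m' n f' x2 \<Longrightarrow> Y' x1 = Y' x2"
      using K2[OF hf' hf BC1s K1b] by blast
    define Z where "Z = (\<lambda>y. if \<exists>x. lam_of m n f x = y then X (SOME x. lam_of m n f x = y)
                           else Y' (SOME x. lam_of m' n f' x = y))"
    have ZC: "\<And>x. Z (lam_of m n f x) = X x"
    proof -
      fix x
      have s: "lam_of m n f (SOME x0. lam_of m n f x0 = lam_of m n f x) = lam_of m n f x"
        using someI[of "\<lambda>x0. lam_of m n f x0 = lam_of m n f x" x] by simp
      have ex: "\<exists>x0. lam_of m n f x0 = lam_of m n f x" by blast
      have "Z (lam_of m n f x) = X (SOME x0. lam_of m n f x0 = lam_of m n f x)"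
        unfolding Z_def using ex by (simp only: if_True)
      also have "... = X x" using K2a[OF s] .
      finally show "Z (lam_of m n f x) = X x" .
    qed
    have ZD: "\<And>x. Z (lam_of m' n f' x) = Y' x"
    proof -
      fix x
      show "Z (lam_of m' n f' x) = Y' x"
      proof (cases "\<exists>x0. lam_of m n f x0 = lam_of m' n f' x")
        case True
        have s: "lam_of m n f (SOME x0. lam_of m n f x0 = lam_of m' n f' x) = lam_of m' n f' x"
          using someI_ex[OF True] .
        have "Z (lam_of m' n f' x) = X (SOME x0. lam_of m n f x0 = lam_of m' n f' x)"
          unfolding Z_def using True by (simp only: if_True)
        also have "... = Y' x" using K1a s by blast
        finally show ?thesis .
      next
        case False
        have s: "lam_of m' n f' (SOME x0. lam_of m' n f' x0 = lam_of m' n f' x) = lam_of m' n f' x"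
          using someI[of "\<lambda>x0. lam_of m' n f' x0 = lam_of m' n f' x" x] by simp
        have "Z (lam_of m' n f' x) = Y' (SOME x0. lam_of m' n f' x0 = lam_of m' n f' x)"
          unfolding Z_def using False by (simp only: if_False)
        also have "... = Y' x" using K2b[OF s] .
        finally show ?thesis .
      qed
    qed
    have cover: "\<And>y. (\<exists>x. lam_of m n f x = y) \<or> (\<exists>x. lam_of m' n f' x = y)"
      using K4[OF BC1] by blast
    have Zstep: "\<And>y. Z y \<le> Z (y + 1)"
    proof -
      fix y
      from K5[OF hf hf' la la' BC1 BC2, of y]
      show "Z y \<le> Z (y + 1)"
      proof
        assume "\<exists>x1 x2. x1 \<le> x2 \<and> lam_of m n f x1 = y \<and> lam_of m n f x2 = y + 1"
        then obtain x1 x2 where "x1 \<le> x2" "lam_of m n f x1 = y" "lam_of m n f x2 = y + 1" by blast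
        then show ?thesis using ZC monoX unfolding mono_def by metis
      next
        assume "\<exists>x1 x2. x1 \<le> x2 \<and> lam_of m' n f' x1 = y \<and> lam_of m' n f' x2 = y + 1"
        then obtain x1 x2 where "x1 \<le> x2" "lam_of m' n f' x1 = y" "lam_of m' n f' x2 = y + 1" by blast
        then show ?thesis using ZD monoY' unfolding mono_def by metis
      qed
    qed
    have Ze: "\<And>y. Z (y + int n + 1) = Z y + K"
    proof -
      fix y
      from cover[of y] show "Z (y + int n + 1) = Z y + K"
      proof
        assume "\<exists>x. lam_of m n f x = y"
        then obtain x where x: "lam_of m n f x = y" by blast
        have "Z (y + int n + 1) = Z (lam_of m n f (x + int m + 1))" using RCe x by simp
        also have "... = X x + K" using ZC Xe by simp
        moreover have "Z y = X x" using ZC[of x] unfolding x .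
        ultimately show ?thesis by simp
      next
        assume "\<exists>x. lam_of m' n f' x = y"
        then obtain x where x: "lam_of m' n f' x = y" by blast
        have "Z (y + int n + 1) = Z (lam_of m' n f' (x + int m' + 1))" using RDe x by simp
        also have "... = Y' x + K" using ZD Y'e by simp
        moreover have "Z y = Y' x" using ZD[of x] unfolding x .
        ultimately show ?thesis by simp
      qed
    qed
    show "\<exists>Z. lam_rep n k Z \<and> lam_eq k (Z \<circ> lam_of m n f) X \<and> lam_eq k (Z \<circ> lam_of m' n f') Y \<and>
             (\<forall>W. lam_rep n k W \<and> lam_eq k (W \<circ> lam_of m n f) X \<and> lam_eq k (W \<circ> lam_of m' n f') Y \<longrightarrow>
                  lam_eq k W Z)"
    proof (intro exI[of _ Z] conjI allI impI)
      show "lam_rep n k Z" unfolding lam_rep_def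
        using mono_step[of Z, OF Zstep] Ze unfolding K_def by (simp add: add.assoc)
      show "lam_eq k (Z \<circ> lam_of m n f) X" unfolding lam_eq_def
        by (intro exI[of _ 0]) (simp add: ZC)
      show "lam_eq k (Z \<circ> lam_of m' n f') Y" unfolding lam_eq_def
        by (intro exI[of _ j]) (simp add: ZD Y'_def K_def)
    next
      fix W
      assume W: "lam_rep n k W \<and> lam_eq k (W \<circ> lam_of m n f) X \<and> lam_eq k (W \<circ> lam_of m' n f') Y"
      obtain a where a: "\<And>x. W (lam_of m n f x) = X x + a * K"
        using W unfolding lam_eq_def K_def by auto
      obtain b where b: "\<And>x. W (lam_of m' n f' x) = Y x + b * K"
        using W unfolding lam_eq_def K_def by auto
      have "X (lam_of p m g 0) + a * K = Y (lam_of p m' g' 0) + b * K"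
        using a[of "lam_of p m g 0"] b[of "lam_of p m' g' 0"] CA[of 0] by simp
      then have "a * K = (b - j) * K" using j[of 0] by (simp add: algebra_simps)
      then have ab: "b = a + j" using Kpos by simp
      show "lam_eq k W Z" unfolding lam_eq_def
      proof (intro exI[of _ a] allI)
        fix y
        from cover[of y] show "W y = Z y + a * (int k + 1)"
        proof
          assume "\<exists>x. lam_of m n f x = y"
          then obtain x where x: "lam_of m n f x = y" by blast
          then show ?thesis using a[of x] ZC[of x] unfolding K_def by simp
        next
          assume "\<exists>x. lam_of m' n f' x = y"
          then obtain x where x: "lam_of m' n f' x = y" by blast
          then show ?thesis using b[of x] ZD[of x] unfolding K_def Y'_def by (simp add: ab algebra_simps)
        qed
      qed
    qed
  qed
qed

end
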